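(* Let $A>0$ and let $\mathcal S$ be a Sawtooth model with $n\ge1$ upper particles such that $\int_0^1f_1=1$ and $\|f_1\|_\infty\le A$. Then for every $x_2\in[0,1)$ and every $x\in[0,1]$, $d_{X_I\mid X_2=x_2}(x)\le 4A^2$. Consequently, for every event $\mathcal X$ of positive probability in the $\sigma$-algebra generated by $\{X_i,Y_i\}_{i\ge2}$, one has $\|d_{X_I\mid\mathcal X}\|_\infty\le K_A:=4A^2$.
   Context: A (type $--$) Sawtooth model with $n\ge1$ upper particles is specified by functions $f_1,g_1,\dots,f_n,g_n:[0,1]\to[0,\infty)$, each nondecreasing, $C^1$ and not identically zero. It is the probability space $[0,1]^{n+1}\times[0,1]^n$ with probability density at $(x_1,\dots,x_{n+1},y_1,\dots,y_n)$ equal to $\frac{1}{\mathcal V}\prod_{i=1}^n\mathbf 1_{\{x_i\le y_i\}}\mathbf 1_{\{x_{i+1}\le y_i\}}f_i(y_i-x_i)\,g_i(y_i-x_{i+1})$, $\mathcal V$ being the normalizing constant; lower particles $X_1,\dots,X_{n+1}$, upper particles $Y_1,\dots,Y_n$, $X_I:=X_1$. Conditional densities are computed from the joint density. *)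

theory Defs
  imports "HOL-Probability.Probability"
begin

text \<open>Sawtooth model (type --). Lower particles are indexed 1..n+1, upper particles 1..n;
  a configuration is a pair (x, y) of functions nat => real (extensional on these index sets).\<close>

definition unit_int :: "real measure" where
  "unit_int = restrict_space lborel {0..1}"

definition C1_on :: "(real \<Rightarrow> real) \<Rightarrow> real set \<Rightarrow> bool" where
  "C1_on h S \<longleftrightarrow> (\<exists>D. continuous_on S D \<and> (\<forall>t\<in>S. (h has_real_derivative D t) (at t within S)))"

definition sawtooth_model :: "nat \<Rightarrow> (nat \<Rightarrow> real \<Rightarrow> real) \<Rightarrow> (nat \<Rightarrow> real \<Rightarrow> real) \<Rightarrow> bool" where
  "sawtooth_model n f g \<longleftrightarrow> n \<ge> 1 \<and>
     (\<forall>i\<in>{1..n}. (\<forall>t\<in>{0..1}. f i t \<ge> 0 \<and> g i t \<ge> 0)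
        \<and> mono_on {0..1} (f i) \<and> mono_on {0..1} (g i)
        \<and> C1_on (f i) {0..1} \<and> C1_on (g i) {0..1}
        \<and> (\<exists>t\<in>{0..1}. f i t \<noteq> 0) \<and> (\<exists>t\<in>{0..1}. g i t \<noteq> 0))"

text \<open>Unnormalised joint density (the normalising constant V is omitted).\<close>
definition saw_weight :: "nat \<Rightarrow> (nat \<Rightarrow> real \<Rightarrow> real) \<Rightarrow> (nat \<Rightarrow> real \<Rightarrow> real)
    \<Rightarrow> (nat \<Rightarrow> real) \<Rightarrow> (nat \<Rightarrow> real) \<Rightarrow> real" where
  "saw_weight n f g x y = (\<Prod>i\<in>{1..n}.
      (if x i \<le> y i \<and> x (Suc i) \<le> y i then f i (y i - x i) * g i (y i - x (Suc i)) else 0))"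

definition saw_base :: "nat \<Rightarrow> ((nat \<Rightarrow> real) \<times> (nat \<Rightarrow> real)) measure" where
  "saw_base n = PiM {1..n+1} (\<lambda>_. unit_int) \<Otimes>\<^sub>M PiM {1..n} (\<lambda>_. unit_int)"

definition saw_V :: "nat \<Rightarrow> (nat \<Rightarrow> real \<Rightarrow> real) \<Rightarrow> (nat \<Rightarrow> real \<Rightarrow> real) \<Rightarrow> real" where
  "saw_V n f g = (\<integral>z. saw_weight n f g (fst z) (snd z) \<partial>saw_base n)"

definition saw_prob :: "nat \<Rightarrow> (nat \<Rightarrow> real \<Rightarrow> real) \<Rightarrow> (nat \<Rightarrow> real \<Rightarrow> real)
    \<Rightarrow> ((nat \<Rightarrow> real) \<times> (nat \<Rightarrow> real)) measure" where
  "saw_prob n f g = density (saw_base n)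
      (\<lambda>z. ennreal (saw_weight n f g (fst z) (snd z) / saw_V n f g))"

definition marg_X1_X2 :: "nat \<Rightarrow> (nat \<Rightarrow> real \<Rightarrow> real) \<Rightarrow> (nat \<Rightarrow> real \<Rightarrow> real) \<Rightarrow> real \<Rightarrow> real \<Rightarrow> real" where
  "marg_X1_X2 n f g x x2 =
     (\<integral>z. saw_weight n f g (\<lambda>i. if i = 1 then x else if i = 2 then x2 else fst z i) (snd z)
        \<partial>(PiM {3..n+1} (\<lambda>_. unit_int) \<Otimes>\<^sub>M PiM {1..n} (\<lambda>_. unit_int)))"

text \<open>Conditional density of X_I = X_1 given X_2 = x2, evaluated at x.\<close>
definition cond_dens_X1_given_X2 :: "nat \<Rightarrow> (nat \<Rightarrow> real \<Rightarrow> real) \<Rightarrow> (nat \<Rightarrow> real \<Rightarrow> real) \<Rightarrow> real \<Rightarrow> real \<Rightarrow> real" where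
  "cond_dens_X1_given_X2 n f g x2 x =
     marg_X1_X2 n f g x x2 / (\<integral>t\<in>{0..1}. marg_X1_X2 n f g t x2 \<partial>lborel)"

text \<open>Events in the sigma-algebra generated by X_2..X_{n+1}, Y_2..Y_n.\<close>
definition tail_event :: "nat \<Rightarrow> ((nat \<Rightarrow> real) \<times> (nat \<Rightarrow> real)) set \<Rightarrow> bool" where
  "tail_event n E \<longleftrightarrow> (\<exists>B \<in> sets (PiM {2..n+1} (\<lambda>_. unit_int) \<Otimes>\<^sub>M PiM {2..n} (\<lambda>_. unit_int)).
      E = {z \<in> space (saw_base n). (restrict (fst z) {2..n+1}, restrict (snd z) {2..n}) \<in> B})"

definition cond_dens_X1_given_event :: "nat \<Rightarrow> (nat \<Rightarrow> real \<Rightarrow> real) \<Rightarrow> (nat \<Rightarrow> real \<Rightarrow> real)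
    \<Rightarrow> ((nat \<Rightarrow> real) \<times> (nat \<Rightarrow> real)) set \<Rightarrow> real \<Rightarrow> real" where
  "cond_dens_X1_given_event n f g E x =
     (\<integral>z. saw_weight n f g ((fst z)(1 := x)) (snd z) * indicator E ((fst z)(1 := x), snd z)
        \<partial>(PiM {2..n+1} (\<lambda>_. unit_int) \<Otimes>\<^sub>M PiM {1..n} (\<lambda>_. unit_int)))
     / (\<integral>z. saw_weight n f g (fst z) (snd z) * indicator E z \<partial>saw_base n)"

end

theory Submission
  imports Defs
begin


lemma half_lemma:
  fixes F :: "real \<Rightarrow> real" and A y :: real
  assumes mF[measurable]: "F \<in> borel_measurable borel"
    and F0: "\<And>t. F t \<ge> 0" and FA: "\<And>t. F t \<le> A"
    and int1: "(\<integral>\<^sup>+ s. ennreal (F s) * indicator {0..1} s \<partial>lborel) = 1"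
    and A: "A > 0" and y: "1 - 1/(2*A) \<le> y" "y \<le> 1"
  shows "ennreal (1/2) \<le> (\<integral>\<^sup>+ s. ennreal (F s) * indicator {0..y} s \<partial>lborel)"
proof -
  define S where "S = (\<integral>\<^sup>+ s. ennreal (F s) * indicator {0..y} s \<partial>lborel)"
  have "(1::ennreal) \<le> (\<integral>\<^sup>+ s. ennreal (F s) * indicator {0..y} s + ennreal A * indicator {y<..1} s \<partial>lborel)"
    unfolding int1[symmetric]
    by (intro nn_integral_mono) (auto simp: indicator_def FA ennreal_leI)
  also have "\<dots> = S + ennreal A * ennreal (1 - y)"
    using y by (simp add: nn_integral_add nn_integral_cmult_indicator S_def)
  also have "ennreal A * ennreal (1 - y) = ennreal (A * (1-y))"
    using A y by (simp add: ennreal_mult)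
  finally have 1: "1 \<le> S + ennreal (A * (1 - y))" .
  have "A * (1 - y) \<le> 1/2"
  proof -
    have "1 - y \<le> 1/(2*A)" using y by simp
    then have "A * (1-y) \<le> A * (1/(2*A))" using A by (intro mult_left_mono) auto
    then show ?thesis using A by simp
  qed
  then have "ennreal (A * (1 - y)) \<le> ennreal (1/2)" by (rule ennreal_leI)
  with 1 have 2: "1 \<le> S + ennreal (1/2)" by (meson add_left_mono order_trans)
  show ?thesis
  proof (cases "S = \<top>")
    case True then show ?thesis unfolding S_def[symmetric] by simp
  next
    case False
    then obtain s where s: "S = ennreal s" "s \<ge> 0" by (cases S) auto
    have "ennreal 1 \<le> ennreal (s + 1/2)" using 2 s by (subst ennreal_plus) auto
    then have "1 \<le> s + 1/2" using s by (subst (asm) ennreal_le_iff) auto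
    then show ?thesis unfolding S_def[symmetric] s by (intro ennreal_leI) simp
  qed
qed

lemma oneD:
  fixes F G :: "real \<Rightarrow> real" and A x2 x :: real
  assumes mF: "mono F" and mG: "mono G" and F0: "\<And>t. F t \<ge> 0" and G0: "\<And>t. G t \<ge> 0"
    and FA: "\<And>t. F t \<le> A"
    and int1: "(\<integral>\<^sup>+ s. ennreal (F s) * indicator {0..1} s \<partial>lborel) = 1"
    and A: "A > 0" and x2: "0 \<le> x2" "x2 \<le> 1"
  defines "Phi \<equiv> \<lambda>t. \<integral>\<^sup>+ y. ennreal (if t \<le> y \<and> x2 \<le> y then F (y - t) * G (y - x2) else 0) * indicator {0..1} y \<partial>lborel"
  shows "Phi x \<le> ennreal (4*A^2) * (\<integral>\<^sup>+ t. Phi t * indicator {0..1} t \<partial>lborel)"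
proof -
  have [measurable]: "F \<in> borel_measurable borel" "G \<in> borel_measurable borel"
    using borel_measurable_mono mF mG by auto
  define c where "c = 1/(2*A)"
  define L where "L = max x2 (1 - c)"
  define Gint where "Gint = (\<integral>\<^sup>+ y. ennreal (G (y - x2)) * indicator {x2..1} y \<partial>lborel)"
  define H where "H = (\<integral>\<^sup>+ y. ennreal (G (y - x2)) * indicator {L..1} y \<partial>lborel)"
  define W where "W = (\<lambda>t y. ennreal (if t \<le> y \<and> x2 \<le> y then F (y - t) * G (y - x2) else 0) * indicator {0..1} y * indicator {0..1} t)"
  have Wm[measurable]: "(\<lambda>(t, y). W t y) \<in> borel_measurable (lborel \<Otimes>\<^sub>M lborel)"
    unfolding W_def by measurable
  have "ennreal 1 \<le> ennreal A"
  proof -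
    have "ennreal 1 = (\<integral>\<^sup>+ s. ennreal (F s) * indicator {0..1} s \<partial>lborel)" using int1 by simp
    also have "\<dots> \<le> (\<integral>\<^sup>+ s. ennreal A * indicator {0..1::real} s \<partial>lborel)"
      by (intro nn_integral_mono) (auto simp: indicator_def FA ennreal_leI)
    also have "\<dots> = ennreal A" by (simp add: nn_integral_cmult_indicator)
    finally show ?thesis .
  qed
  then have A1: "1 \<le> A" using A by (subst (asm) ennreal_le_iff) auto
  have c: "0 < c" "c \<le> 1/2" using A1 by (auto simp: c_def field_simps)
  have a: "Phi x \<le> ennreal A * Gint"
  proof -
    have "Phi x \<le> (\<integral>\<^sup>+ y. ennreal A * (ennreal (G (y - x2)) * indicator {x2..1} y) \<partial>lborel)"
      unfolding Phi_def
    proof (intro nn_integral_mono)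
      fix y
      show "ennreal (if x \<le> y \<and> x2 \<le> y then F (y - x) * G (y - x2) else 0) * indicator {0..1} y
          \<le> ennreal A * (ennreal (G (y - x2)) * indicator {x2..1} y)"
      proof (cases "x \<le> y \<and> x2 \<le> y \<and> y \<le> 1")
        case True
        have "F (y - x) * G (y - x2) \<le> A * G (y - x2)" by (intro mult_right_mono FA G0)
        then have "ennreal (F (y - x) * G (y - x2)) \<le> ennreal A * ennreal (G (y - x2))"
          using A G0 by (simp add: ennreal_mult[symmetric] ennreal_leI)
        then show ?thesis using True by (auto simp: indicator_def)
      qed (auto simp: indicator_def)
    qed
    also have "\<dots> = ennreal A * Gint" unfolding Gint_def by (rule nn_integral_cmult) measurable
    finally show ?thesis .
  qed
  have b: "ennreal (1/2) * H \<le> (\<integral>\<^sup>+ t. Phi t * indicator {0..1} t \<partial>lborel)"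
  proof -
    have "(\<integral>\<^sup>+ t. Phi t * indicator {0..1} t \<partial>lborel) = (\<integral>\<^sup>+ t. \<integral>\<^sup>+ y. W t y \<partial>lborel \<partial>lborel)"
      unfolding Phi_def W_def
      by (intro nn_integral_cong, rule nn_integral_multc[symmetric]) measurable
    also have "\<dots> = (\<integral>\<^sup>+ y. \<integral>\<^sup>+ t. W t y \<partial>lborel \<partial>lborel)"
      by (rule lborel_pair.Fubini'[symmetric]) (rule Wm)
    finally have eq: "(\<integral>\<^sup>+ t. Phi t * indicator {0..1} t \<partial>lborel) = (\<integral>\<^sup>+ y. \<integral>\<^sup>+ t. W t y \<partial>lborel \<partial>lborel)" .
    have "(\<integral>\<^sup>+ y. ennreal (1/2) * (ennreal (G (y - x2)) * indicator {L..1} y) \<partial>lborel) \<le> (\<integral>\<^sup>+ y. \<integral>\<^sup>+ t. W t y \<partial>lborel \<partial>lborel)"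
    proof (intro nn_integral_mono)
      fix y
      show "ennreal (1/2) * (ennreal (G (y - x2)) * indicator {L..1} y) \<le> (\<integral>\<^sup>+ t. W t y \<partial>lborel)"
      proof (cases "y \<in> {L..1}")
        case True
        then have y: "x2 \<le> y" "1 - c \<le> y" "y \<le> 1" by (auto simp: L_def)
        have y0: "0 \<le> y" using y x2 by simp
        have "(\<integral>\<^sup>+ t. W t y \<partial>lborel) = (\<integral>\<^sup>+ t. ennreal (G (y - x2)) * (ennreal (F (y - t)) * indicator {0..y} t) \<partial>lborel)"
          unfolding W_def
          by (intro nn_integral_cong) (use y y0 in \<open>auto simp: indicator_def ennreal_mult F0 G0 mult.commute\<close>)
        also have "\<dots> = ennreal (G (y - x2)) * (\<integral>\<^sup>+ t. ennreal (F (y - t)) * indicator {0..y} t \<partial>lborel)"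
          by (rule nn_integral_cmult) measurable
        also have "(\<integral>\<^sup>+ t. ennreal (F (y - t)) * indicator {0..y} t \<partial>lborel) = (\<integral>\<^sup>+ s. ennreal (F s) * indicator {0..y} s \<partial>lborel)"
        proof -
          show ?thesis
            apply (subst nn_integral_real_affine[where c="-1" and t=y])
              apply measurable
             apply simp
            apply (auto intro!: nn_integral_cong simp: indicator_def)
            done
        qed
        finally have eqW: "(\<integral>\<^sup>+ t. W t y \<partial>lborel) = ennreal (G (y - x2)) * (\<integral>\<^sup>+ s. ennreal (F s) * indicator {0..y} s \<partial>lborel)" .
        have h: "ennreal (1/2) \<le> (\<integral>\<^sup>+ s. ennreal (F s) * indicator {0..y} s \<partial>lborel)"
          by (rule half_lemma[OF _ F0 FA int1 A]) (use y c_def in auto)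
        have "ennreal (1/2) * (ennreal (G (y - x2)) * indicator {L..1} y) = ennreal (1/2) * ennreal (G (y - x2))"
          using True by simp
        also have "\<dots> \<le> (\<integral>\<^sup>+ s. ennreal (F s) * indicator {0..y} s \<partial>lborel) * ennreal (G (y - x2))"
          by (rule mult_right_mono[OF h]) simp
        also have "\<dots> = (\<integral>\<^sup>+ t. W t y \<partial>lborel)" unfolding eqW by (rule mult.commute)
        finally show ?thesis .
      qed auto
    qed
    also have "(\<integral>\<^sup>+ y. ennreal (1/2) * (ennreal (G (y - x2)) * indicator {L..1} y) \<partial>lborel) = ennreal (1/2) * H"
      unfolding H_def by (rule nn_integral_cmult) measurable
    finally show ?thesis using eq by simp
  qed
  have d: "ennreal c * Gint \<le> H"
  proof -
    have "H = ennreal c * (\<integral>\<^sup>+ u. ennreal (G ((1 - c) + c * u - x2)) * indicator {L..1} ((1 - c) + c * u) \<partial>lborel)"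
      unfolding H_def
      apply (subst nn_integral_real_affine[where c=c and t="1-c"])
        apply measurable
      using c by auto
    moreover have "Gint \<le> (\<integral>\<^sup>+ u. ennreal (G ((1 - c) + c * u - x2)) * indicator {L..1} ((1 - c) + c * u) \<partial>lborel)"
      unfolding Gint_def
    proof (intro nn_integral_mono)
      fix u
      show "ennreal (G (u - x2)) * indicator {x2..1} u \<le> ennreal (G ((1 - c) + c * u - x2)) * indicator {L..1} ((1 - c) + c * u)"
      proof (cases "u \<in> {x2..1}")
        case True
        then have u: "x2 \<le> u" "u \<le> 1" by auto
        have cu: "c * u \<le> c" using c u by (simp add: mult_left_le)
        have "(1 - c) * u \<le> (1 - c) * 1" using c u by (intro mult_left_mono) auto
        then have le: "u \<le> (1 - c) + c * u" by (simp add: algebra_simps)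
        have cu0: "0 \<le> c * u" using c u x2 by simp
        have inL: "(1 - c) + c * u \<in> {L..1}" using le u cu cu0 by (auto simp: L_def)
        have "G (u - x2) \<le> G ((1 - c) + c * u - x2)" using le by (intro monoD[OF mG]) simp
        then show ?thesis using True inL by (auto simp: ennreal_leI)
      qed auto
    qed
    ultimately show ?thesis using c by (simp add: mult_left_mono)
  qed
  have eqA: "A = (4*A^2) * (1/2) * c" using A by (simp add: c_def field_simps power2_eq_square)
  have m1: "ennreal (4*A^2 * (1/2) * c) = ennreal (4*A^2 * (1/2)) * ennreal c"
    by (rule ennreal_mult) (use c in auto)
  have m2: "ennreal (4*A^2 * (1/2)) = ennreal (4*A^2) * ennreal (1/2)"
    by (rule ennreal_mult) auto
  have "ennreal A = ennreal (4*A^2) * ennreal (1/2) * ennreal c"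
    using eqA m1 m2 by metis
  then have "Phi x \<le> ennreal (4*A^2) * (ennreal (1/2) * (ennreal c * Gint))"
    using a by (simp add: mult.assoc)
  also have "\<dots> \<le> ennreal (4*A^2) * (ennreal (1/2) * H)"
    by (intro mult_left_mono d) auto
  also have "\<dots> \<le> ennreal (4*A^2) * (\<integral>\<^sup>+ t. Phi t * indicator {0..1} t \<partial>lborel)"
    by (intro mult_left_mono b) auto
  finally show ?thesis .
qed


definition PhiF :: "(real \<Rightarrow> real) \<Rightarrow> (real \<Rightarrow> real) \<Rightarrow> real \<Rightarrow> real \<Rightarrow> ennreal" where
  "PhiF F G x2 t = (\<integral>\<^sup>+ y. ennreal (if t \<le> y \<and> x2 \<le> y then F (y - t) * G (y - x2) else 0) * indicator {0..1} y \<partial>lborel)"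

lemma PhiF_meas:
  assumes [measurable]: "F \<in> borel_measurable borel" "G \<in> borel_measurable borel"
  shows "(\<lambda>t. PhiF F G x2 t) \<in> borel_measurable borel"
proof -
  have "(\<lambda>t. PhiF F G x2 t) \<in> borel_measurable lborel"
    unfolding PhiF_def
    by (rule lborel.borel_measurable_nn_integral) measurable
  then show ?thesis by simp
qed

lemma PhiF_bound:
  fixes F G :: "real \<Rightarrow> real"
  assumes mG: "mono G" and G0: "\<And>t. G t \<ge> 0" and FA: "\<And>t. F t \<le> A" and A: "A \<ge> 0" and x2: "0 \<le> x2"
  shows "PhiF F G x2 t \<le> ennreal (A * G 1)"
proof -
  have "PhiF F G x2 t \<le> (\<integral>\<^sup>+ y. ennreal (A * G 1) * indicator {0..1::real} y \<partial>lborel)"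
    unfolding PhiF_def
  proof (intro nn_integral_mono)
    fix y :: real
    show "ennreal (if t \<le> y \<and> x2 \<le> y then F (y - t) * G (y - x2) else 0) * indicator {0..1} y \<le> ennreal (A * G 1) * indicator {0..1} y"
    proof (cases "y \<in> {0..1}")
      case True
      have "G (y - x2) \<le> G 1" using True x2 by (intro monoD[OF mG]) auto
      then have "F (y - t) * G (y - x2) \<le> A * G 1"
        using FA[of "y - t"] G0[of "y - x2"] A by (meson mult_mono order_trans mult_right_mono)
      then show ?thesis using True G0[of 1] A by (auto intro!: ennreal_leI)
    qed auto
  qed
  also have "\<dots> = ennreal (A * G 1)" by (simp add: nn_integral_cmult_indicator)
  finally show ?thesis .
qed

lemma oneD':
  fixes F G :: "real \<Rightarrow> real" and A x2 x :: real
  assumes mF: "mono F" and mG: "mono G" and F0: "\<And>t. F t \<ge> 0" and G0: "\<And>t. G t \<ge> 0"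
    and FA: "\<And>t. F t \<le> A"
    and int1: "(\<integral>\<^sup>+ s. ennreal (F s) * indicator {0..1} s \<partial>lborel) = 1"
    and A: "A > 0" and x2: "0 \<le> x2" "x2 \<le> 1"
  shows "PhiF F G x2 x \<le> ennreal (4*A^2) * (\<integral>\<^sup>+ t. PhiF F G x2 t * indicator {0..1} t \<partial>lborel)"
  unfolding PhiF_def by (rule oneD[OF assms])



lemma space_unit_int[simp]: "space unit_int = {0..1}"
  by (simp add: unit_int_def space_restrict_space)

lemma unit_int_prob: "prob_space unit_int"
  unfolding unit_int_def
  by (rule prob_spaceI) (simp add: space_restrict_space emeasure_restrict_space)

lemma psf: "product_sigma_finite (\<lambda>_::nat. unit_int)"
proof -
  interpret product_prob_space "\<lambda>_::nat. unit_int"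
    by (simp add: product_prob_spaceI unit_int_prob)
  show ?thesis by unfold_locales
qed

lemma PiM_prob: "prob_space (PiM I (\<lambda>_::nat. unit_int))"
  by (simp add: prob_space_PiM unit_int_prob)

lemma comp_meas: "i \<in> I \<Longrightarrow> (\<lambda>x. x i) \<in> borel_measurable (PiM I (\<lambda>_::nat. unit_int))"
  apply (rule measurable_compose[OF measurable_component_singleton[of i I]], assumption)
  unfolding unit_int_def
  apply (rule measurable_restrict_space1)
  by simp

definition cl :: "real \<Rightarrow> real" where "cl t = max 0 (min 1 t)"

lemma cl_in: "cl t \<in> {0..1}" by (auto simp: cl_def)
lemma cl_id: "t \<in> {0..1} \<Longrightarrow> cl t = t" by (auto simp: cl_def)
lemma cl_mono: "s \<le> t \<Longrightarrow> cl s \<le> cl t" by (auto simp: cl_def)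

lemma mono_clamp: fixes h :: "real \<Rightarrow> real" shows "mono_on {0..1} h \<Longrightarrow> mono (\<lambda>t. h (cl t))"
  by (auto intro!: monoI mono_onD[of "{0..1}" h] cl_in cl_mono)

lemma meas_clamp: fixes h :: "real \<Rightarrow> real" shows "mono_on {0..1} h \<Longrightarrow> (\<lambda>t. h (cl t)) \<in> borel_measurable borel"
  using mono_clamp[of h] borel_measurable_mono by blast

definition fac :: "(nat \<Rightarrow> real \<Rightarrow> real) \<Rightarrow> (nat \<Rightarrow> real \<Rightarrow> real) \<Rightarrow> nat \<Rightarrow> (nat\<Rightarrow>real) \<Rightarrow> (nat\<Rightarrow>real) \<Rightarrow> real" where
 "fac f g i x y = (if x i \<le> y i \<and> x (Suc i) \<le> y i then f i (y i - x i) * g i (y i - x (Suc i)) else 0)"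

lemma fac_meas:
  assumes mf: "mono_on {0..1} (f i)" "mono_on {0..1} (g i)"
   and X: "(\<lambda>a. X a i) \<in> borel_measurable M" "(\<lambda>a. X a (Suc i)) \<in> borel_measurable M" "(\<lambda>a. Y a i) \<in> borel_measurable M"
   and rng: "\<And>a. a \<in> space M \<Longrightarrow> X a i \<in> {0..1} \<and> X a (Suc i) \<in> {0..1} \<and> Y a i \<in> {0..1}"
  shows "(\<lambda>a. fac f g i (X a) (Y a)) \<in> borel_measurable M"
proof -
  note m1 = meas_clamp[OF mf(1)] and m2 = meas_clamp[OF mf(2)]
  have "(\<lambda>a. if X a i \<le> Y a i \<and> X a (Suc i) \<le> Y a i then f i (cl (Y a i - X a i)) * g i (cl (Y a i - X a (Suc i))) else 0) \<in> borel_measurable M"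
    apply (intro measurable_If borel_measurable_times pred_intros_conj1' )
    apply (rule measurable_compose[OF _ m1], intro borel_measurable_diff X)
    apply (rule measurable_compose[OF _ m2], intro borel_measurable_diff X)
    apply simp
    using X by measurable
  then show ?thesis
  proof (rule measurable_cong[THEN iffD1, rotated])
    fix w assume "w \<in> space M"
    from rng[OF this] show "(if X w i \<le> Y w i \<and> X w (Suc i) \<le> Y w i then f i (cl (Y w i - X w i)) * g i (cl (Y w i - X w (Suc i))) else 0) = fac f g i (X w) (Y w)"
      by (auto simp: fac_def cl_id)
  qed
qed

lemma fac_nonneg:
  assumes "\<forall>t\<in>{0..1}. f i t \<ge> 0 \<and> g i t \<ge> 0" "x i \<in> {0..1}" "x (Suc i) \<in> {0..1}" "y i \<in> {0..1}"
  shows "fac f g i x y \<ge> 0"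
  using assms by (auto simp: fac_def intro!: mult_nonneg_nonneg)


lemma id_U_borel: "(\<lambda>x. x) \<in> measurable unit_int borel"
  unfolding unit_int_def by (rule measurable_restrict_space1) simp

lemma U_to_borel: "h \<in> measurable M unit_int \<Longrightarrow> h \<in> borel_measurable M"
  using measurable_compose[OF _ id_U_borel] by blast

lemma U_range: "h \<in> measurable M unit_int \<Longrightarrow> a \<in> space M \<Longrightarrow> h a \<in> {0..1}"
  using measurable_space[of h M unit_int a] by simp

lemma sm_facts:
  assumes "sawtooth_model n f g" "i \<in> {1..n}"
  shows "mono_on {0..1} (f i)" "mono_on {0..1} (g i)" "\<forall>t\<in>{0..1}. f i t \<ge> 0 \<and> g i t \<ge> 0" "n \<ge> 1"
  using assms unfolding sawtooth_model_def by blast+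

lemma prodfac_meas:
  assumes sm: "sawtooth_model n f g" and S: "S \<subseteq> {1..n}"
   and X: "\<And>i. i \<in> S \<Longrightarrow> (\<lambda>a. X a i) \<in> measurable M unit_int" "\<And>i. i \<in> S \<Longrightarrow> (\<lambda>a. X a (Suc i)) \<in> measurable M unit_int"
   and Y: "\<And>i. i \<in> S \<Longrightarrow> (\<lambda>a. Y a i) \<in> measurable M unit_int"
  shows "(\<lambda>a. \<Prod>i\<in>S. fac f g i (X a) (Y a)) \<in> borel_measurable M"
proof (rule borel_measurable_prod)
  fix i assume i: "i \<in> S"
  with S have i': "i \<in> {1..n}" by auto
  show "(\<lambda>a. fac f g i (X a) (Y a)) \<in> borel_measurable M"
    apply (rule fac_meas[where f=f and g=g and i=i and X=X and Y=Y and M=M])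
    using sm_facts(1,2)[OF sm i'] U_to_borel[OF X(1)[OF i]] U_to_borel[OF X(2)[OF i]] U_to_borel[OF Y[OF i]]
      U_range[OF X(1)[OF i]] U_range[OF X(2)[OF i]] U_range[OF Y[OF i]] by auto
qed

lemma prodfac_nonneg:
  assumes sm: "sawtooth_model n f g" and S: "S \<subseteq> {1..n}"
   and X: "\<And>i. i \<in> S \<Longrightarrow> x i \<in> {0..1} \<and> x (Suc i) \<in> {0..1} \<and> y i \<in> {0..1}"
  shows "0 \<le> (\<Prod>i\<in>S. fac f g i x y)"
proof (rule prod_nonneg)
  fix i assume i: "i \<in> S"
  with S have i': "i \<in> {1..n}" by auto
  show "0 \<le> fac f g i x y" using fac_nonneg[where f=f and g=g and i=i and x=x and y=y] sm_facts(3)[OF sm i'] X[OF i] by blast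
qed

lemma sw_eq: "saw_weight n f g x y = (\<Prod>i\<in>{1..n}. fac f g i x y)"
  by (simp add: saw_weight_def fac_def)

lemma sw_split: "1 \<le> n \<Longrightarrow> saw_weight n f g x y = fac f g 1 x y * (\<Prod>i\<in>{2..n}. fac f g i x y)"
proof -
  assume n: "1 \<le> n"
  have e: "{1..n} = insert 1 {2..n}" using n by auto
  show ?thesis unfolding sw_eq e by (subst prod.insert) auto
qed

lemma R_cong: "(\<And>i. 2 \<le> i \<Longrightarrow> x i = x' i) \<Longrightarrow> (\<And>i. 2 \<le> i \<Longrightarrow> y i = y' i) \<Longrightarrow>
   (\<Prod>i\<in>{2..n}. fac f g i x y) = (\<Prod>i\<in>{2..n}. fac f g i x' y')"
  by (intro prod.cong) (auto simp: fac_def)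

lemma sw_meas:
  assumes sm: "sawtooth_model n f g"
   and X: "\<And>i. i \<in> {1..n+1} \<Longrightarrow> (\<lambda>a. X a i) \<in> measurable M unit_int"
   and Y: "\<And>i. i \<in> {1..n} \<Longrightarrow> (\<lambda>a. Y a i) \<in> measurable M unit_int"
  shows "(\<lambda>a. saw_weight n f g (X a) (Y a)) \<in> borel_measurable M"
  unfolding sw_eq by (rule prodfac_meas[OF sm order_refl]) (auto intro!: X Y)

lemma sw_nonneg:
  assumes sm: "sawtooth_model n f g"
   and X: "\<And>i. i \<in> {1..n+1} \<Longrightarrow> x i \<in> {0..1}" and Y: "\<And>i. i \<in> {1..n} \<Longrightarrow> y i \<in> {0..1}"
  shows "0 \<le> saw_weight n f g x y"
  unfolding sw_eq by (rule prodfac_nonneg[OF sm order_refl]) (intro conjI X Y; auto)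


lemma U_int: "(\<integral>\<^sup>+ y. h y \<partial>unit_int) = (\<integral>\<^sup>+ y. h y * indicator {0..1} y \<partial>lborel)"
  unfolding unit_int_def by (rule nn_integral_restrict_space) simp

lemma sfU: "sigma_finite_measure unit_int"
  using unit_int_prob by (simp add: prob_space_imp_sigma_finite)

lemma sfPi: "sigma_finite_measure (PiM I (\<lambda>_::nat. unit_int))"
  using PiM_prob by (simp add: prob_space_imp_sigma_finite)

lemma fac1_eq:
  assumes "x 1 \<in> {0..1}" "x 2 \<in> {0..1}" "y 1 \<in> {0..1}"
  shows "fac f g 1 x y = (if x 1 \<le> y 1 \<and> x 2 \<le> y 1 then f 1 (cl (y 1 - x 1)) * g 1 (cl (y 1 - x 2)) else 0)"
  using assms by (auto simp: fac_def cl_id numeral_2_eq_2)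

lemma inner:
  assumes sm: "sawtooth_model n f g"
   and xr: "\<And>i. i \<in> {1..n+1} \<Longrightarrow> x i \<in> {0..1}"
   and e: "e \<in> borel_measurable (PiM {2..n} (\<lambda>_. unit_int))" "\<And>r. 0 \<le> e r"
  shows "(\<integral>\<^sup>+ y. ennreal (saw_weight n f g x y * e (restrict y {2..n})) \<partial>PiM {1..n} (\<lambda>_. unit_int))
     = PhiF (\<lambda>s. f 1 (cl s)) (\<lambda>s. g 1 (cl s)) (x 2) (x 1) * (\<integral>\<^sup>+ r. ennreal ((\<Prod>i\<in>{2..n}. fac f g i x r) * e r) \<partial>PiM {2..n} (\<lambda>_. unit_int))"
proof -
  interpret P: product_sigma_finite "\<lambda>_::nat. unit_int" by (rule psf)
  have n: "1 \<le> n" using sm by (simp add: sawtooth_model_def)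
  have ins: "{1..n} = insert 1 {2..n}" using n by auto
  define F where "F = (\<lambda>s. f 1 (cl s))"
  define G where "G = (\<lambda>s. g 1 (cl s))"
  have n1: "1 \<in> {1..n}" using n by simp
  have mF: "F \<in> borel_measurable borel" unfolding F_def by (rule meas_clamp[OF sm_facts(1)[OF sm n1]])
  have mG: "G \<in> borel_measurable borel" unfolding G_def by (rule meas_clamp[OF sm_facts(2)[OF sm n1]])
  have x1: "x 1 \<in> {0..1}" and x2: "x 2 \<in> {0..1}" using xr n by auto
  have xconst: "\<And>i M. i \<in> {1..n+1} \<Longrightarrow> (\<lambda>a. x i) \<in> measurable M unit_int"
    using xr by (intro measurable_const) auto
  have swm: "(\<lambda>y. saw_weight n f g x y) \<in> borel_measurable (PiM {1..n} (\<lambda>_. unit_int))"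
    by (rule sw_meas[OF sm]) (auto intro!: xconst)
  have em: "(\<lambda>y. e (restrict y {2..n})) \<in> borel_measurable (PiM {1..n} (\<lambda>_. unit_int))"
    by (rule measurable_compose[OF measurable_restrict_subset e(1)]) auto
  have Rm: "(\<lambda>r. ennreal ((\<Prod>i\<in>{2..n}. fac f g i x r) * e r)) \<in> borel_measurable (PiM {2..n} (\<lambda>_. unit_int))"
  proof -
    have "(\<lambda>r. (\<Prod>i\<in>{2..n}. fac f g i x r)) \<in> borel_measurable (PiM {2..n} (\<lambda>_. unit_int))"
      by (rule prodfac_meas[OF sm, where X="\<lambda>_. x" and Y="\<lambda>r. r"]) (auto intro!: xconst)
    then show ?thesis using e(1) by measurable
  qed
  have "(\<integral>\<^sup>+ y. ennreal (saw_weight n f g x y * e (restrict y {2..n})) \<partial>PiM {1..n} (\<lambda>_. unit_int))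
     = (\<integral>\<^sup>+ r. (\<integral>\<^sup>+ y1. ennreal (saw_weight n f g x (r(1:=y1)) * e (restrict (r(1:=y1)) {2..n})) \<partial>unit_int) \<partial>PiM {2..n} (\<lambda>_. unit_int))"
    unfolding ins
    by (rule P.product_nn_integral_insert) (use swm em ins in auto)
  also have "\<dots> = (\<integral>\<^sup>+ r. PhiF F G (x 2) (x 1) * ennreal ((\<Prod>i\<in>{2..n}. fac f g i x r) * e r) \<partial>PiM {2..n} (\<lambda>_. unit_int))"
  proof (rule nn_integral_cong)
    fix r assume r: "r \<in> space (PiM {2..n} (\<lambda>_::nat. unit_int))"
    have rr: "restrict r {2..n} = r" using r by (simp add: space_PiM PiE_restrict)
    have R0: "0 \<le> (\<Prod>i\<in>{2..n}. fac f g i x r)"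
      by (rule prodfac_nonneg[OF sm]) (use r xr in \<open>auto simp: space_PiM PiE_iff\<close>)
    have "(\<integral>\<^sup>+ y1. ennreal (saw_weight n f g x (r(1:=y1)) * e (restrict (r(1:=y1)) {2..n})) \<partial>unit_int)
        = (\<integral>\<^sup>+ y1. ennreal (if x 1 \<le> y1 \<and> x 2 \<le> y1 then F (y1 - x 1) * G (y1 - x 2) else 0) * ennreal ((\<Prod>i\<in>{2..n}. fac f g i x r) * e r) \<partial>unit_int)"
    proof (rule nn_integral_cong)
      fix y1 assume y1: "y1 \<in> space unit_int"
      have "saw_weight n f g x (r(1:=y1)) = fac f g 1 x (r(1:=y1)) * (\<Prod>i\<in>{2..n}. fac f g i x (r(1:=y1)))"
        by (rule sw_split[OF n])
      also have "(\<Prod>i\<in>{2..n}. fac f g i x (r(1:=y1))) = (\<Prod>i\<in>{2..n}. fac f g i x r)"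
        by (rule R_cong) auto
      also have "fac f g 1 x (r(1:=y1)) = (if x 1 \<le> y1 \<and> x 2 \<le> y1 then F (y1 - x 1) * G (y1 - x 2) else 0)"
        using fac1_eq[of x "r(1:=y1)" f g] x1 x2 y1 by (simp add: F_def G_def)
      finally have sw: "saw_weight n f g x (r(1:=y1)) = (if x 1 \<le> y1 \<and> x 2 \<le> y1 then F (y1 - x 1) * G (y1 - x 2) else 0) * (\<Prod>i\<in>{2..n}. fac f g i x r)" .
      have W0: "0 \<le> (if x 1 \<le> y1 \<and> x 2 \<le> y1 then F (y1 - x 1) * G (y1 - x 2) else 0)"
        using sm_facts(3)[OF sm n1] cl_in by (auto simp: F_def G_def)
      show "ennreal (saw_weight n f g x (r(1:=y1)) * e (restrict (r(1:=y1)) {2..n})) = ennreal (if x 1 \<le> y1 \<and> x 2 \<le> y1 then F (y1 - x 1) * G (y1 - x 2) else 0) * ennreal ((\<Prod>i\<in>{2..n}. fac f g i x r) * e r)"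
        unfolding sw using rr W0 R0 e(2)[of r] by (simp add: ennreal_mult[symmetric] mult.assoc)
    qed
    also have "\<dots> = (\<integral>\<^sup>+ y1. ennreal (if x 1 \<le> y1 \<and> x 2 \<le> y1 then F (y1 - x 1) * G (y1 - x 2) else 0) \<partial>unit_int) * ennreal ((\<Prod>i\<in>{2..n}. fac f g i x r) * e r)"
    proof (rule nn_integral_multc)
      have "(\<lambda>y1. ennreal (if x 1 \<le> y1 \<and> x 2 \<le> y1 then F (y1 - x 1) * G (y1 - x 2) else 0)) \<in> borel_measurable borel"
        using mF mG by measurable
      then show "(\<lambda>y1. ennreal (if x 1 \<le> y1 \<and> x 2 \<le> y1 then F (y1 - x 1) * G (y1 - x 2) else 0)) \<in> borel_measurable unit_int"
        using measurable_compose[OF id_U_borel] by blast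
    qed
    also have "(\<integral>\<^sup>+ y1. ennreal (if x 1 \<le> y1 \<and> x 2 \<le> y1 then F (y1 - x 1) * G (y1 - x 2) else 0) \<partial>unit_int) = PhiF F G (x 2) (x 1)"
      unfolding U_int PhiF_def ..
    finally show "(\<integral>\<^sup>+ y1. ennreal (saw_weight n f g x (r(1:=y1)) * e (restrict (r(1:=y1)) {2..n})) \<partial>unit_int) = PhiF F G (x 2) (x 1) * ennreal ((\<Prod>i\<in>{2..n}. fac f g i x r) * e r)" .
  qed
  also have "\<dots> = PhiF F G (x 2) (x 1) * (\<integral>\<^sup>+ r. ennreal ((\<Prod>i\<in>{2..n}. fac f g i x r) * e r) \<partial>PiM {2..n} (\<lambda>_. unit_int))"
    by (rule nn_integral_cmult[OF Rm])
  finally show ?thesis unfolding F_def G_def .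
qed


lemma comp_U: "i \<in> I \<Longrightarrow> (\<lambda>x. x i) \<in> measurable (PiM I (\<lambda>_::nat. unit_int)) unit_int"
  by (rule measurable_component_singleton)

lemma part2:
  assumes sm: "sawtooth_model n f g" and A: "A > 0"
    and int1: "(\<integral>\<^sup>+ s. ennreal (f 1 (cl s)) * indicator {0..1} s \<partial>lborel) = 1"
    and FA: "\<And>t. f 1 (cl t) \<le> A"
    and B: "B \<in> sets (PiM {2..n+1} (\<lambda>_. unit_int) \<Otimes>\<^sub>M PiM {2..n} (\<lambda>_. unit_int))" and x: "x \<in> {0..1}"
  defines "H \<equiv> \<lambda>q y. ennreal (saw_weight n f g q y * indicator B (restrict q {2..n+1}, restrict y {2..n}))"
  shows "(\<integral>\<^sup>+ z. H ((fst z)(1:=x)) (snd z) \<partial>(PiM {2..n+1} (\<lambda>_. unit_int) \<Otimes>\<^sub>M PiM {1..n} (\<lambda>_. unit_int)))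
     \<le> ennreal (4*A^2) * (\<integral>\<^sup>+ z. H (fst z) (snd z) \<partial>(PiM {1..n+1} (\<lambda>_. unit_int) \<Otimes>\<^sub>M PiM {1..n} (\<lambda>_. unit_int)))"
proof -
  let ?U = "unit_int"
  let ?P1 = "PiM {1..n+1} (\<lambda>_::nat. unit_int)"
  let ?P2 = "PiM {2..n+1} (\<lambda>_::nat. unit_int)"
  let ?N = "PiM {1..n} (\<lambda>_::nat. unit_int)"
  let ?N2 = "PiM {2..n} (\<lambda>_::nat. unit_int)"
  interpret P: product_sigma_finite "\<lambda>_::nat. unit_int" by (rule psf)
  interpret N: sigma_finite_measure ?N by (rule sfPi)
  interpret Us: sigma_finite_measure ?U by (rule sfU)
  have n: "1 \<le> n" using sm by (simp add: sawtooth_model_def)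
  have n1: "1 \<in> {1..n}" using n by simp
  define F where "F = (\<lambda>s. f 1 (cl s))"
  define G where "G = (\<lambda>s. g 1 (cl s))"
  have mF: "mono F" unfolding F_def by (rule mono_clamp[OF sm_facts(1)[OF sm n1]])
  have mG: "mono G" unfolding G_def by (rule mono_clamp[OF sm_facts(2)[OF sm n1]])
  have F0: "\<And>t. F t \<ge> 0" and G0: "\<And>t. G t \<ge> 0"
    using sm_facts(3)[OF sm n1] cl_in unfolding F_def G_def by auto
  have mFb: "F \<in> borel_measurable borel" "G \<in> borel_measurable borel"
    using mF mG borel_measurable_mono by auto
  have Hm: "(\<lambda>z. H (fst z) (snd z)) \<in> borel_measurable (?P1 \<Otimes>\<^sub>M ?N)"
  proof -
    have sw: "(\<lambda>z. saw_weight n f g (fst z) (snd z)) \<in> borel_measurable (?P1 \<Otimes>\<^sub>M ?N)"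
      by (rule sw_meas[OF sm]) (auto intro!: measurable_compose[OF measurable_fst comp_U] measurable_compose[OF measurable_snd comp_U])
    have rm: "(\<lambda>z. (restrict (fst z) {2..n+1}, restrict (snd z) {2..n})) \<in> measurable (?P1 \<Otimes>\<^sub>M ?N) (?P2 \<Otimes>\<^sub>M ?N2)"
      by (intro measurable_Pair measurable_compose[OF measurable_fst measurable_restrict_subset] measurable_compose[OF measurable_snd measurable_restrict_subset]) auto
    have ind: "(\<lambda>z. indicator B (restrict (fst z) {2..n+1}, restrict (snd z) {2..n}) :: real) \<in> borel_measurable (?P1 \<Otimes>\<^sub>M ?N)"
      by (rule measurable_compose[OF rm borel_measurable_indicator[OF B]])
    show ?thesis unfolding H_def using sw ind by measurable
  qed
  have updm: "(\<lambda>z. ((fst z)(1:=x), snd z)) \<in> measurable (?P2 \<Otimes>\<^sub>M ?N) (?P1 \<Otimes>\<^sub>M ?N)"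
  proof (intro measurable_Pair)
    show "(\<lambda>z. (fst z)(1:=x)) \<in> measurable (?P2 \<Otimes>\<^sub>M ?N) ?P1"
      by (rule measurable_fun_upd[where J="{2..n+1}"]) (use x in auto)
  qed simp
  have upd2m: "(\<lambda>z. ((fst (fst z))(1:=snd (fst z)), snd z)) \<in> measurable ((?P2 \<Otimes>\<^sub>M ?U) \<Otimes>\<^sub>M ?N) (?P1 \<Otimes>\<^sub>M ?N)"
  proof (intro measurable_Pair)
    show "(\<lambda>z. (fst (fst z))(1:=snd (fst z))) \<in> measurable ((?P2 \<Otimes>\<^sub>M ?U) \<Otimes>\<^sub>M ?N) ?P1"
      by (rule measurable_fun_upd[where J="{2..n+1}"]) auto
  qed simp
  define K where "K = (\<lambda>p. \<integral>\<^sup>+ r. ennreal ((\<Prod>i\<in>{2..n}. fac f g i p r) * indicator B (restrict p {2..n+1}, r)) \<partial>?N2)"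
  have key: "(\<integral>\<^sup>+ y. H (p(1:=t)) y \<partial>?N) = PhiF F G (p 2) t * K p"
    if p: "p \<in> space ?P2" and t: "t \<in> {0..1}" for p t
  proof -
    have rp: "restrict p {2..n+1} \<in> space ?P2" using p by (simp add: space_PiM PiE_restrict)
    have em: "(\<lambda>r. indicator B (restrict p {2..n+1}, r) :: real) \<in> borel_measurable ?N2"
      by (rule measurable_compose[OF measurable_Pair1'[OF rp] borel_measurable_indicator[OF B]])
    have Rc: "\<And>r. (\<Prod>i\<in>{2..n}. fac f g i (p(1:=t)) r) = (\<Prod>i\<in>{2..n}. fac f g i p r)"
      by (rule R_cong) auto
    have xr: "\<And>i. i \<in> {1..n+1} \<Longrightarrow> (p(1:=t)) i \<in> {0..1}"
      using p t by (auto simp: space_PiM PiE_iff)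
    have "(\<integral>\<^sup>+ y. H (p(1:=t)) y \<partial>?N) = (\<integral>\<^sup>+ y. ennreal (saw_weight n f g (p(1:=t)) y * indicator B (restrict p {2..n+1}, restrict y {2..n})) \<partial>?N)"
      unfolding H_def by simp
    also have "\<dots> = PhiF F G ((p(1:=t)) 2) ((p(1:=t)) 1) * (\<integral>\<^sup>+ r. ennreal ((\<Prod>i\<in>{2..n}. fac f g i (p(1:=t)) r) * indicator B (restrict p {2..n+1}, r)) \<partial>?N2)"
      unfolding F_def G_def
      by (rule inner[OF sm xr em]) auto
    finally show ?thesis unfolding K_def using Rc by simp
  qed
  have PhiU: "(\<lambda>t. PhiF F G x2 t) \<in> borel_measurable ?U" for x2
    using measurable_compose[OF id_U_borel PhiF_meas[OF mFb]] by blast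
  have Num: "(\<integral>\<^sup>+ z. H ((fst z)(1:=x)) (snd z) \<partial>(?P2 \<Otimes>\<^sub>M ?N)) = (\<integral>\<^sup>+ p. PhiF F G (p 2) x * K p \<partial>?P2)"
  proof -
    have "(\<integral>\<^sup>+ z. H ((fst z)(1:=x)) (snd z) \<partial>(?P2 \<Otimes>\<^sub>M ?N)) = (\<integral>\<^sup>+ p. \<integral>\<^sup>+ y. H (p(1:=x)) y \<partial>?N \<partial>?P2)"
      using N.nn_integral_fst[OF measurable_compose[OF updm Hm]] by simp
    also have "\<dots> = (\<integral>\<^sup>+ p. PhiF F G (p 2) x * K p \<partial>?P2)"
      by (rule nn_integral_cong) (rule key[OF _ x])
    finally show ?thesis .
  qed
  define DI where "DI = (\<lambda>p. \<integral>\<^sup>+ x1. \<integral>\<^sup>+ y. H (p(1:=x1)) y \<partial>?N \<partial>?U)"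
  have DIm: "DI \<in> borel_measurable ?P2"
  proof -
    have "(\<lambda>w. H (fst ((fst (fst w))(1:=snd (fst w)), snd w)) (snd ((fst (fst w))(1:=snd (fst w)), snd w))) \<in> borel_measurable ((?P2 \<Otimes>\<^sub>M ?U) \<Otimes>\<^sub>M ?N)"
      by (rule measurable_compose[OF upd2m Hm])
    then have "(\<lambda>(v, y). H ((fst v)(1:=snd v)) y) \<in> borel_measurable ((?P2 \<Otimes>\<^sub>M ?U) \<Otimes>\<^sub>M ?N)"
      by (simp add: split_beta')
    then have "(\<lambda>v. \<integral>\<^sup>+ y. H ((fst v)(1:=snd v)) y \<partial>?N) \<in> borel_measurable (?P2 \<Otimes>\<^sub>M ?U)"
      by (rule N.borel_measurable_nn_integral)
    then have "(\<lambda>(p, x1). \<integral>\<^sup>+ y. H (p(1:=x1)) y \<partial>?N) \<in> borel_measurable (?P2 \<Otimes>\<^sub>M ?U)"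
      by (simp add: split_beta')
    then show ?thesis unfolding DI_def by (rule sigma_finite_measure.borel_measurable_nn_integral[OF sfU])
  qed
  have Den: "(\<integral>\<^sup>+ z. H (fst z) (snd z) \<partial>(?P1 \<Otimes>\<^sub>M ?N)) = (\<integral>\<^sup>+ p. DI p \<partial>?P2)"
  proof -
    have "(\<integral>\<^sup>+ z. H (fst z) (snd z) \<partial>(?P1 \<Otimes>\<^sub>M ?N)) = (\<integral>\<^sup>+ q. \<integral>\<^sup>+ y. H q y \<partial>?N \<partial>?P1)"
      using N.nn_integral_fst[OF Hm] by simp
    also have "\<dots> = (\<integral>\<^sup>+ p. \<integral>\<^sup>+ x1. \<integral>\<^sup>+ y. H (p(1:=x1)) y \<partial>?N \<partial>?U \<partial>?P2)"
    proof -
      have ins: "{1..n+1} = insert 1 {2..n+1}" by auto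
      have "(\<lambda>(q, y). H q y) \<in> borel_measurable (?P1 \<Otimes>\<^sub>M ?N)" using Hm by (simp add: split_beta')
      then have m: "(\<lambda>q. \<integral>\<^sup>+ y. H q y \<partial>?N) \<in> borel_measurable ?P1"
        by (rule N.borel_measurable_nn_integral)
      show ?thesis unfolding ins
        by (rule P.product_nn_integral_insert) (use m ins in auto)
    qed
    finally show ?thesis unfolding DI_def .
  qed
  have pw: "PhiF F G (p 2) x * K p \<le> ennreal (4*A^2) * DI p" if p: "p \<in> space ?P2" for p
  proof -
    have p2: "p 2 \<in> {0..1}" using p n by (auto simp: space_PiM PiE_iff)
    have "PhiF F G (p 2) x \<le> ennreal (4*A^2) * (\<integral>\<^sup>+ t. PhiF F G (p 2) t * indicator {0..1} t \<partial>lborel)"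
      by (rule oneD'[OF mF mG F0 G0]) (use FA int1 A p2 in \<open>auto simp: F_def\<close>)
    also have "(\<integral>\<^sup>+ t. PhiF F G (p 2) t * indicator {0..1} t \<partial>lborel) = (\<integral>\<^sup>+ t. PhiF F G (p 2) t \<partial>?U)"
      by (simp add: U_int)
    finally have "PhiF F G (p 2) x * K p \<le> ennreal (4*A^2) * (\<integral>\<^sup>+ t. PhiF F G (p 2) t \<partial>?U) * K p"
      by (intro mult_right_mono) auto
    then have "PhiF F G (p 2) x * K p \<le> ennreal (4*A^2) * ((\<integral>\<^sup>+ t. PhiF F G (p 2) t \<partial>?U) * K p)"
      by (simp add: mult.assoc)
    also have "(\<integral>\<^sup>+ t. PhiF F G (p 2) t \<partial>?U) * K p = (\<integral>\<^sup>+ t. PhiF F G (p 2) t * K p \<partial>?U)"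
      by (rule nn_integral_multc[symmetric, OF PhiU])
    also have "\<dots> = DI p"
      unfolding DI_def by (rule nn_integral_cong) (use key[OF p] in auto)
    finally show ?thesis .
  qed
  have "(\<integral>\<^sup>+ p. PhiF F G (p 2) x * K p \<partial>?P2) \<le> (\<integral>\<^sup>+ p. ennreal (4*A^2) * DI p \<partial>?P2)"
    by (rule nn_integral_mono) (rule pw)
  also have "\<dots> = ennreal (4*A^2) * (\<integral>\<^sup>+ p. DI p \<partial>?P2)"
    by (rule nn_integral_cmult[OF DIm])
  finally show ?thesis unfolding Num Den .
qed


lemma xvcomp:
  assumes "t \<in> {0..1}" "x2 \<in> {0..1}" "i \<in> {1..n+1}"
  shows "(\<lambda>a. if i = 1 then t else if i = 2 then x2 else fst a i) \<in> measurable (PiM {3..n+1} (\<lambda>_::nat. unit_int) \<Otimes>\<^sub>M M') unit_int"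
proof (cases "i = 1 \<or> i = 2")
  case True then show ?thesis using assms by (auto intro!: measurable_const)
next
  case False
  then have "i \<in> {3..n+1}" using assms by auto
  then show ?thesis using False by (auto intro!: measurable_compose[OF measurable_fst comp_U])
qed

lemma part1:
  assumes sm: "sawtooth_model n f g" and x2: "x2 \<in> {0..1}" and t: "t \<in> {0..1}"
  shows "marg_X1_X2 n f g t x2 = enn2real (PhiF (\<lambda>s. f 1 (cl s)) (\<lambda>s. g 1 (cl s)) x2 t) *
     enn2real (\<integral>\<^sup>+ p. \<integral>\<^sup>+ r. ennreal (\<Prod>i\<in>{2..n}. fac f g i (\<lambda>i. if i = 1 then 0 else if i = 2 then x2 else p i) r) \<partial>PiM {2..n} (\<lambda>_. unit_int) \<partial>PiM {3..n+1} (\<lambda>_. unit_int))"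
proof -
  let ?U = "unit_int"
  let ?M3 = "PiM {3..n+1} (\<lambda>_::nat. unit_int)"
  let ?N = "PiM {1..n} (\<lambda>_::nat. unit_int)"
  let ?N2 = "PiM {2..n} (\<lambda>_::nat. unit_int)"
  interpret N: sigma_finite_measure ?N by (rule sfPi)
  interpret N2: sigma_finite_measure ?N2 by (rule sfPi)
  have n: "1 \<le> n" using sm by (simp add: sawtooth_model_def)
  define X where "X = (\<lambda>p::nat\<Rightarrow>real. \<lambda>i. if i = 1 then t else if i = 2 then x2 else p i)"
  define X0 where "X0 = (\<lambda>p::nat\<Rightarrow>real. \<lambda>i. if i = 1 then 0 else if i = 2 then x2 else p i)"
  define PH where "PH = PhiF (\<lambda>s. f 1 (cl s)) (\<lambda>s. g 1 (cl s)) x2 t"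
  define K where "K = (\<lambda>p. \<integral>\<^sup>+ r. ennreal (\<Prod>i\<in>{2..n}. fac f g i (X0 p) r) \<partial>?N2)"
  have swm: "(\<lambda>z. saw_weight n f g (X (fst z)) (snd z)) \<in> borel_measurable (?M3 \<Otimes>\<^sub>M ?N)"
  proof (rule sw_meas[OF sm])
    fix i assume i: "i \<in> {1..n+1}"
    show "(\<lambda>a. X (fst a) i) \<in> measurable (?M3 \<Otimes>\<^sub>M ?N) unit_int"
      unfolding X_def by (rule xvcomp[OF t x2 i])
  next
    fix i assume i: "i \<in> {1..n}"
    show "(\<lambda>a. snd a i) \<in> measurable (?M3 \<Otimes>\<^sub>M ?N) unit_int"
      using i by (auto intro!: measurable_compose[OF measurable_snd comp_U])
  qed
  have sw0: "0 \<le> saw_weight n f g (X (fst z)) (snd z)" if z: "z \<in> space (?M3 \<Otimes>\<^sub>M ?N)" for z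
    by (rule sw_nonneg[OF sm]) (use z t x2 in \<open>auto simp: X_def space_pair_measure space_PiM PiE_iff\<close>)
  have "marg_X1_X2 n f g t x2 = (\<integral>z. saw_weight n f g (X (fst z)) (snd z) \<partial>(?M3 \<Otimes>\<^sub>M ?N))"
    unfolding marg_X1_X2_def X_def ..
  also have "\<dots> = enn2real (\<integral>\<^sup>+ z. ennreal (saw_weight n f g (X (fst z)) (snd z)) \<partial>(?M3 \<Otimes>\<^sub>M ?N))"
    by (rule integral_eq_nn_integral[OF swm]) (auto intro!: AE_I2 sw0)
  also have "(\<integral>\<^sup>+ z. ennreal (saw_weight n f g (X (fst z)) (snd z)) \<partial>(?M3 \<Otimes>\<^sub>M ?N)) = (\<integral>\<^sup>+ p. \<integral>\<^sup>+ y. ennreal (saw_weight n f g (X p) y) \<partial>?N \<partial>?M3)"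
    using N.nn_integral_fst[of "\<lambda>z. ennreal (saw_weight n f g (X (fst z)) (snd z))" ?M3] swm by simp
  also have "\<dots> = (\<integral>\<^sup>+ p. PH * K p \<partial>?M3)"
  proof (rule nn_integral_cong)
    fix p assume p: "p \<in> space ?M3"
    have xr: "\<And>i. i \<in> {1..n+1} \<Longrightarrow> X p i \<in> {0..1}"
      using p t x2 by (auto simp: X_def space_PiM PiE_iff)
    have "(\<integral>\<^sup>+ y. ennreal (saw_weight n f g (X p) y) \<partial>?N) = (\<integral>\<^sup>+ y. ennreal (saw_weight n f g (X p) y * (\<lambda>_. 1) (restrict y {2..n})) \<partial>?N)"
      by simp
    also have "\<dots> = PhiF (\<lambda>s. f 1 (cl s)) (\<lambda>s. g 1 (cl s)) (X p 2) (X p 1) * (\<integral>\<^sup>+ r. ennreal ((\<Prod>i\<in>{2..n}. fac f g i (X p) r) * (\<lambda>_. 1) r) \<partial>?N2)"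
      by (rule inner[OF sm xr]) auto
    also have "(\<lambda>r. (\<Prod>i\<in>{2..n}. fac f g i (X p) r) * (\<lambda>_. 1) r) = (\<lambda>r. \<Prod>i\<in>{2..n}. fac f g i (X0 p) r)"
      by (rule ext, simp, rule R_cong) (auto simp: X_def X0_def)
    finally show "(\<integral>\<^sup>+ y. ennreal (saw_weight n f g (X p) y) \<partial>?N) = PH * K p"
      unfolding PH_def K_def by (simp add: X_def)
  qed
  also have "\<dots> = PH * (\<integral>\<^sup>+ p. K p \<partial>?M3)"
  proof (rule nn_integral_cmult)
    have "(\<lambda>z. \<Prod>i\<in>{2..n}. fac f g i (X0 (fst z)) (snd z)) \<in> borel_measurable (?M3 \<Otimes>\<^sub>M ?N2)"
    proof (rule prodfac_meas[OF sm])
      fix i assume i: "i \<in> {2..n}"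
      show "(\<lambda>a. X0 (fst a) i) \<in> measurable (?M3 \<Otimes>\<^sub>M ?N2) unit_int"
        unfolding X0_def by (rule xvcomp) (use i x2 in auto)
      show "(\<lambda>a. X0 (fst a) (Suc i)) \<in> measurable (?M3 \<Otimes>\<^sub>M ?N2) unit_int"
        unfolding X0_def by (rule xvcomp) (use i x2 in auto)
      show "(\<lambda>a. snd a i) \<in> measurable (?M3 \<Otimes>\<^sub>M ?N2) unit_int"
        using i by (auto intro!: measurable_compose[OF measurable_snd comp_U])
    qed auto
    then have "(\<lambda>(p, r). ennreal (\<Prod>i\<in>{2..n}. fac f g i (X0 p) r)) \<in> borel_measurable (?M3 \<Otimes>\<^sub>M ?N2)"
      by (simp add: split_beta')
    then show "K \<in> borel_measurable ?M3" unfolding K_def by (rule N2.borel_measurable_nn_integral)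
  qed
  finally show ?thesis unfolding PH_def K_def X0_def by (simp add: enn2real_mult)
qed



lemma hr_meas:
  assumes sm: "sawtooth_model n f g"
    and B: "B \<in> sets (PiM {2..n+1} (\<lambda>_. unit_int) \<Otimes>\<^sub>M PiM {2..n} (\<lambda>_. unit_int))"
  shows "(\<lambda>z. saw_weight n f g (fst z) (snd z) * indicator B (restrict (fst z) {2..n+1}, restrict (snd z) {2..n}))
     \<in> borel_measurable (PiM {1..n+1} (\<lambda>_::nat. unit_int) \<Otimes>\<^sub>M PiM {1..n} (\<lambda>_::nat. unit_int))"
proof -
  let ?P1 = "PiM {1..n+1} (\<lambda>_::nat. unit_int)"
  let ?P2 = "PiM {2..n+1} (\<lambda>_::nat. unit_int)"
  let ?N = "PiM {1..n} (\<lambda>_::nat. unit_int)"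
  let ?N2 = "PiM {2..n} (\<lambda>_::nat. unit_int)"
  have sw: "(\<lambda>z. saw_weight n f g (fst z) (snd z)) \<in> borel_measurable (?P1 \<Otimes>\<^sub>M ?N)"
    by (rule sw_meas[OF sm]) (auto intro!: measurable_compose[OF measurable_fst comp_U] measurable_compose[OF measurable_snd comp_U])
  have rm: "(\<lambda>z. (restrict (fst z) {2..n+1}, restrict (snd z) {2..n})) \<in> measurable (?P1 \<Otimes>\<^sub>M ?N) (?P2 \<Otimes>\<^sub>M ?N2)"
    by (intro measurable_Pair measurable_compose[OF measurable_fst measurable_restrict_subset] measurable_compose[OF measurable_snd measurable_restrict_subset]) auto
  have ind: "(\<lambda>z. indicator B (restrict (fst z) {2..n+1}, restrict (snd z) {2..n}) :: real) \<in> borel_measurable (?P1 \<Otimes>\<^sub>M ?N)"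
    by (rule measurable_compose[OF rm borel_measurable_indicator[OF B]])
  show ?thesis using sw ind by measurable
qed

lemma upd_meas:
  assumes x: "x \<in> {0..1}"
  shows "(\<lambda>z. ((fst z)(1:=x), snd z)) \<in> measurable (PiM {2..n+1} (\<lambda>_::nat. unit_int) \<Otimes>\<^sub>M PiM {1..n} (\<lambda>_::nat. unit_int)) (PiM {1..n+1} (\<lambda>_::nat. unit_int) \<Otimes>\<^sub>M PiM {1..n} (\<lambda>_::nat. unit_int))"
proof (intro measurable_Pair)
  show "(\<lambda>z. (fst z)(1:=x)) \<in> measurable (PiM {2..n+1} (\<lambda>_::nat. unit_int) \<Otimes>\<^sub>M PiM {1..n} (\<lambda>_::nat. unit_int)) (PiM {1..n+1} (\<lambda>_::nat. unit_int))"
    by (rule measurable_fun_upd[where J="{2..n+1}"]) (use x in auto)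
qed simp

lemma ratio_bound:
  fixes a b c :: real
  assumes "0 \<le> a" "0 \<le> b" "a \<le> c * b" "0 \<le> c"
  shows "a / b \<le> c"
proof (cases "b = 0")
  case True then show ?thesis using assms by simp
next
  case False then have "b > 0" using assms by simp
  then show ?thesis using assms by (simp add: divide_le_eq)
qed

theorem mainTheorem10:
  fixes n :: nat and f g :: "nat \<Rightarrow> real \<Rightarrow> real" and A :: real
  assumes "sawtooth_model n f g"
    and "A > 0"
    and "(\<integral>t\<in>{0..1}. f 1 t \<partial>lborel) = 1"
    and "\<forall>t\<in>{0..1}. \<bar>f 1 t\<bar> \<le> A"
  shows "(\<forall>x2\<in>{0..<1}. \<forall>x\<in>{0..1}. cond_dens_X1_given_X2 n f g x2 x \<le> 4 * A\<^sup>2)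
       \<and> (\<forall>E. tail_event n E \<longrightarrow> measure (saw_prob n f g) E > 0 \<longrightarrow>
            (AE x in lborel. x \<in> {0..1} \<longrightarrow> \<bar>cond_dens_X1_given_event n f g E x\<bar> \<le> 4 * A\<^sup>2))"
proof -
  note sm = assms(1) and A = assms(2) and intf = assms(3) and bnd = assms(4)
  have n: "1 \<le> n" using sm by (simp add: sawtooth_model_def)
  have n1: "1 \<in> {1..n}" using n by simp
  define F where "F = (\<lambda>s. f 1 (cl s))"
  define G where "G = (\<lambda>s. g 1 (cl s))"
  have mF: "mono F" unfolding F_def by (rule mono_clamp[OF sm_facts(1)[OF sm n1]])
  have mG: "mono G" unfolding G_def by (rule mono_clamp[OF sm_facts(2)[OF sm n1]])
  have F0: "\<And>t. F t \<ge> 0" and G0: "\<And>t. G t \<ge> 0"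
    using sm_facts(3)[OF sm n1] cl_in unfolding F_def G_def by auto
  have mFb: "F \<in> borel_measurable borel" "G \<in> borel_measurable borel"
    using mF mG borel_measurable_mono by auto
  have FA: "\<And>t. F t \<le> A" using bnd cl_in unfolding F_def by (meson abs_le_D1)
  have int1: "(\<integral>\<^sup>+ s. ennreal (F s) * indicator {0..1} s \<partial>lborel) = 1"
  proof -
    have "(\<integral>t\<in>{0..1}. f 1 t \<partial>lborel) = (\<integral>t. indicator {0..1} t * F t \<partial>lborel)"
      unfolding set_lebesgue_integral_def
      by (intro Bochner_Integration.integral_cong) (auto simp: indicator_def F_def cl_id)
    also have "\<dots> = enn2real (\<integral>\<^sup>+ t. ennreal (indicator {0..1} t * F t) \<partial>lborel)"
      by (rule integral_eq_nn_integral) (use mFb F0 in auto)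
    also have "(\<integral>\<^sup>+ t. ennreal (indicator {0..1} t * F t) \<partial>lborel) = (\<integral>\<^sup>+ s. ennreal (F s) * indicator {0..1} s \<partial>lborel)"
      by (intro nn_integral_cong) (auto simp: indicator_def)
    finally have e: "enn2real (\<integral>\<^sup>+ s. ennreal (F s) * indicator {0..1} s \<partial>lborel) = 1" using intf by simp
    have "(\<integral>\<^sup>+ s. ennreal (F s) * indicator {0..1} s \<partial>lborel) \<le> (\<integral>\<^sup>+ s. ennreal A * indicator {0..1::real} s \<partial>lborel)"
      by (intro nn_integral_mono) (auto simp: indicator_def FA ennreal_leI)
    also have "\<dots> = ennreal A" by (simp add: nn_integral_cmult_indicator)
    finally have "(\<integral>\<^sup>+ s. ennreal (F s) * indicator {0..1} s \<partial>lborel) < top" by (simp add: le_less_trans)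
    then show ?thesis using e by (metis ennreal_enn2real ennreal_1)
  qed
  have part1_goal: "cond_dens_X1_given_X2 n f g x2 x \<le> 4 * A\<^sup>2" if x2: "x2 \<in> {0..<1}" and x: "x \<in> {0..1}" for x2 x
  proof -
    have x2': "x2 \<in> {0..1}" using x2 by auto
    define PH where "PH = (\<lambda>t. PhiF F G x2 t)"
    define Cr where "Cr = enn2real (\<integral>\<^sup>+ p. \<integral>\<^sup>+ r. ennreal (\<Prod>i\<in>{2..n}. fac f g i (\<lambda>i. if i = 1 then 0 else if i = 2 then x2 else p i) r) \<partial>PiM {2..n} (\<lambda>_. unit_int) \<partial>PiM {3..n+1} (\<lambda>_. unit_int))"
    have marg: "marg_X1_X2 n f g t x2 = enn2real (PH t) * Cr" if "t \<in> {0..1}" for t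
      unfolding PH_def Cr_def F_def G_def by (rule part1[OF sm x2' that])
    have Cr0: "0 \<le> Cr" unfolding Cr_def by simp
    have PHb: "PH t < top" for t
    proof -
      have "PH t \<le> ennreal (A * G 1)" unfolding PH_def
        by (rule PhiF_bound[OF mG G0 FA]) (use A x2 in auto)
      then show ?thesis using le_less_trans by fastforce
    qed
    have PHm: "PH \<in> borel_measurable borel" unfolding PH_def by (rule PhiF_meas[OF mFb])
    define J where "J = (\<integral>\<^sup>+ t. PH t * indicator {0..1} t \<partial>lborel)"
    have Jb: "J < top"
    proof -
      have "J \<le> (\<integral>\<^sup>+ t. ennreal (A * G 1) * indicator {0..1::real} t \<partial>lborel)"
        unfolding J_def
      proof (intro nn_integral_mono)
        fix t :: real
        have "PH t \<le> ennreal (A * G 1)" unfolding PH_def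
          by (rule PhiF_bound[OF mG G0 FA]) (use A x2 in auto)
        then show "PH t * indicator {0..1} t \<le> ennreal (A * G 1) * indicator {0..1} t"
          by (auto simp: indicator_def)
      qed
      also have "\<dots> = ennreal (A * G 1)" by (simp add: nn_integral_cmult_indicator)
      finally show ?thesis using le_less_trans by fastforce
    qed
    have den: "(\<integral>t\<in>{0..1}. marg_X1_X2 n f g t x2 \<partial>lborel) = enn2real J * Cr"
    proof -
      have "(\<integral>t\<in>{0..1}. marg_X1_X2 n f g t x2 \<partial>lborel) = (\<integral>t\<in>{0..1}. enn2real (PH t) * Cr \<partial>lborel)"
        by (rule set_lebesgue_integral_cong) (auto simp: marg)
      also have "\<dots> = (\<integral>t\<in>{0..1}. enn2real (PH t) \<partial>lborel) * Cr" by simp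
      also have "(\<integral>t\<in>{0..1}. enn2real (PH t) \<partial>lborel) = enn2real J"
      proof -
        have "(\<integral>t\<in>{0..1}. enn2real (PH t) \<partial>lborel) = (\<integral>t. indicator {0..1} t * enn2real (PH t) \<partial>lborel)"
          unfolding set_lebesgue_integral_def by simp
        also have "\<dots> = enn2real (\<integral>\<^sup>+ t. ennreal (indicator {0..1} t * enn2real (PH t)) \<partial>lborel)"
          by (rule integral_eq_nn_integral) (use PHm in auto)
        also have "(\<integral>\<^sup>+ t. ennreal (indicator {0..1} t * enn2real (PH t)) \<partial>lborel) = J"
          unfolding J_def
          by (intro nn_integral_cong) (use PHb in \<open>auto simp: indicator_def ennreal_enn2real\<close>)
        finally show ?thesis .
      qed
      finally show ?thesis .
    qed
    have bound: "enn2real (PH x) \<le> 4 * A\<^sup>2 * enn2real J"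
    proof -
      have "PH x \<le> ennreal (4*A^2) * J" unfolding PH_def J_def
        by (rule oneD'[OF mF mG F0 G0 FA int1 A]) (use x2 in auto)
      then have "enn2real (PH x) \<le> enn2real (ennreal (4*A^2) * J)"
        by (rule enn2real_mono) (use Jb in \<open>simp add: ennreal_mult_less_top\<close>)
      also have "\<dots> = 4 * A\<^sup>2 * enn2real J" by (simp add: enn2real_mult)
      finally show ?thesis .
    qed
    have "cond_dens_X1_given_X2 n f g x2 x = (enn2real (PH x) * Cr) / (enn2real J * Cr)"
      unfolding cond_dens_X1_given_X2_def den marg[OF x] ..
    also have "\<dots> \<le> 4 * A\<^sup>2"
    proof (rule ratio_bound)
      show "enn2real (PH x) * Cr \<le> 4 * A\<^sup>2 * (enn2real J * Cr)"
        using mult_right_mono[OF bound Cr0] by (simp add: mult.assoc)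
    qed (use Cr0 in auto)
    finally show ?thesis .
  qed
  have part2_goal: "\<bar>cond_dens_X1_given_event n f g E x\<bar> \<le> 4 * A\<^sup>2" if E: "tail_event n E" and x: "x \<in> {0..1}" for E x
  proof -
    let ?P1 = "PiM {1..n+1} (\<lambda>_::nat. unit_int)"
    let ?P2 = "PiM {2..n+1} (\<lambda>_::nat. unit_int)"
    let ?N = "PiM {1..n} (\<lambda>_::nat. unit_int)"
    obtain B where B: "B \<in> sets (PiM {2..n+1} (\<lambda>_. unit_int) \<Otimes>\<^sub>M PiM {2..n} (\<lambda>_. unit_int))"
      and EB: "E = {z \<in> space (saw_base n). (restrict (fst z) {2..n+1}, restrict (snd z) {2..n}) \<in> B}"
      using E unfolding tail_event_def by blast
    define hr where "hr = (\<lambda>q y. saw_weight n f g q y * indicator B (restrict q {2..n+1}, restrict y {2..n}))"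
    have hrm: "(\<lambda>z. hr (fst z) (snd z)) \<in> borel_measurable (?P1 \<Otimes>\<^sub>M ?N)"
      unfolding hr_def by (rule hr_meas[OF sm B])
    have hr0: "0 \<le> hr q y" if "q \<in> space ?P1" "y \<in> space ?N" for q y
      unfolding hr_def using that
      by (intro mult_nonneg_nonneg sw_nonneg[OF sm]) (auto simp: space_PiM PiE_iff)
    have numm: "(\<lambda>z. hr ((fst z)(1:=x)) (snd z)) \<in> borel_measurable (?P2 \<Otimes>\<^sub>M ?N)"
      using measurable_compose[OF upd_meas[OF x] hrm] by simp
    have spc: "((fst z)(1:=x), snd z) \<in> space (saw_base n)" if z: "z \<in> space (?P2 \<Otimes>\<^sub>M ?N)" for z
      using z x by (auto simp: saw_base_def space_pair_measure space_PiM PiE_iff extensional_def)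
    have num: "(\<integral>z. saw_weight n f g ((fst z)(1 := x)) (snd z) * indicator E ((fst z)(1 := x), snd z) \<partial>(?P2 \<Otimes>\<^sub>M ?N))
        = enn2real (\<integral>\<^sup>+ z. ennreal (hr ((fst z)(1:=x)) (snd z)) \<partial>(?P2 \<Otimes>\<^sub>M ?N))"
    proof -
      have "(\<integral>z. saw_weight n f g ((fst z)(1 := x)) (snd z) * indicator E ((fst z)(1 := x), snd z) \<partial>(?P2 \<Otimes>\<^sub>M ?N))
          = (\<integral>z. hr ((fst z)(1:=x)) (snd z) \<partial>(?P2 \<Otimes>\<^sub>M ?N))"
      proof (rule Bochner_Integration.integral_cong[OF refl])
        fix z assume z: "z \<in> space (?P2 \<Otimes>\<^sub>M ?N)"
        show "saw_weight n f g ((fst z)(1 := x)) (snd z) * indicator E ((fst z)(1 := x), snd z) = hr ((fst z)(1:=x)) (snd z)"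
          unfolding hr_def EB using spc[OF z] by (simp add: indicator_def)
      qed
      also have "\<dots> = enn2real (\<integral>\<^sup>+ z. ennreal (hr ((fst z)(1:=x)) (snd z)) \<partial>(?P2 \<Otimes>\<^sub>M ?N))"
      proof (rule integral_eq_nn_integral[OF numm], rule AE_I2)
        fix z assume z: "z \<in> space (?P2 \<Otimes>\<^sub>M ?N)"
        show "0 \<le> hr ((fst z)(1:=x)) (snd z)"
          using spc[OF z] by (intro hr0) (auto simp: saw_base_def space_pair_measure)
      qed
      finally show ?thesis .
    qed
    have dnm: "(\<integral>z. saw_weight n f g (fst z) (snd z) * indicator E z \<partial>saw_base n)
        = enn2real (\<integral>\<^sup>+ z. ennreal (hr (fst z) (snd z)) \<partial>(?P1 \<Otimes>\<^sub>M ?N))"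
    proof -
      have "(\<integral>z. saw_weight n f g (fst z) (snd z) * indicator E z \<partial>saw_base n)
          = (\<integral>z. hr (fst z) (snd z) \<partial>(?P1 \<Otimes>\<^sub>M ?N))"
        unfolding saw_base_def
      proof (rule Bochner_Integration.integral_cong[OF refl])
        fix z assume z: "z \<in> space (?P1 \<Otimes>\<^sub>M ?N)"
        show "saw_weight n f g (fst z) (snd z) * indicator E z = hr (fst z) (snd z)"
          unfolding hr_def EB using z by (simp add: indicator_def saw_base_def)
      qed
      also have "\<dots> = enn2real (\<integral>\<^sup>+ z. ennreal (hr (fst z) (snd z)) \<partial>(?P1 \<Otimes>\<^sub>M ?N))"
      proof (rule integral_eq_nn_integral[OF hrm], rule AE_I2)
        fix z assume z: "z \<in> space (?P1 \<Otimes>\<^sub>M ?N)"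
        show "0 \<le> hr (fst z) (snd z)" using z by (intro hr0) (auto simp: space_pair_measure)
      qed
      finally show ?thesis .
    qed
    define Num where "Num = (\<integral>\<^sup>+ z. ennreal (hr ((fst z)(1:=x)) (snd z)) \<partial>(?P2 \<Otimes>\<^sub>M ?N))"
    define Den where "Den = (\<integral>\<^sup>+ z. ennreal (hr (fst z) (snd z)) \<partial>(?P1 \<Otimes>\<^sub>M ?N))"
    have le: "Num \<le> ennreal (4*A^2) * Den"
      unfolding Num_def Den_def hr_def
      by (rule part2[OF sm A int1[unfolded F_def] FA[unfolded F_def] B x])
    have "cond_dens_X1_given_event n f g E x = enn2real Num / enn2real Den"
      unfolding cond_dens_X1_given_event_def num dnm Num_def Den_def ..
    moreover have "enn2real Num / enn2real Den \<le> 4 * A\<^sup>2"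
    proof (cases "Den = top")
      case True then show ?thesis by simp
    next
      case False
      have "enn2real Num \<le> enn2real (ennreal (4*A^2) * Den)"
        by (rule enn2real_mono[OF le]) (use False in \<open>simp add: ennreal_mult_less_top top.not_eq_extremum\<close>)
      also have "\<dots> = 4 * A\<^sup>2 * enn2real Den" by (simp add: enn2real_mult)
      finally show ?thesis by (intro ratio_bound) auto
    qed
    ultimately show ?thesis by simp
  qed
  show ?thesis
    using part1_goal part2_goal by (auto intro!: AE_I2)
qed

end
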